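(* Let $X\in\mathbb{R}^{n\times p}$ with columns $X_1,\dots,X_p$, let $A$ be a symmetric $n\times n$ $0/1$ matrix, and let $\lambda_1,\lambda_2>0$. Consider the objective $$f(\Phi,D,\Theta)=-n\log\det D-p\log\det\Theta+\mathrm{Tr}(\Theta S(\Phi,D))+\lambda_1\|\Phi\|_1+\lambda_2\|\Theta\|_1,$$ where $\Phi=(\phi_{ij})_{p\times p}$ has columns $\phi_j$, $D=\mathrm{diag}(\rho_1^2,\dots,\rho_p^2)$ with $\rho_j>0$, $$S(\Phi,D)=\frac1p\sum_{j=1}^p(\rho_jX_j-X\phi_j)(\rho_jX_j-X\phi_j)^\top,$$ $\|\Phi\|_1=\sum_{i,j}|\phi_{ij}|$ and $\|\Theta\|_1=\sum_{i\neq j}|\theta_{ij}|$, on the domain where $\phi_{ij}=0$ whenever $j\le i$, each $\rho_j^2>0$, and $\Theta$ is an $n\times n$ positive definite matrix with $\Theta_{ij}=0$ whenever $i\ne j$ and $A_{ij}=0$, and $\mathrm{diag}(\Theta^{-1})=1$. Let $\{(\Phi,D,\Theta)^{(t)}:t=1,2,\dots\}$ be a sequence generated by block coordinate descent that cyclically minimizes $f$ exactly over the blocks $\Phi$, $D$, $\Theta$ in turn. Then for almost all $X\in\mathbb{R}^{n\times p}$ (with respect to Lebesgue measure), every cluster point of $\{(\Phi,D,\Theta)^{(t)}\}$ is a stationary point of $f$.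
   Context: A stationary point of $f$ is a point of its domain at which all directional derivatives of $f$ are nonnegative. The nodes of the DAG are assumed to be sorted in a natural (topological) ordering, so $\Phi$ is restricted to be strictly upper triangular. *)

theory Defs
  imports "HOL-Analysis.Analysis"
begin

text \<open>Matrices are Cartesian vectors: X :: real^'p^'n is an n x p matrix
(rows indexed by 'n, columns by 'p).  The diagonal matrix D = diag(rho_1^2,...,rho_p^2)
is represented by the vector d of its diagonal entries d_j = rho_j^2, rho_j = sqrt d_j.\<close>

definition diag_mat :: "real^'p \<Rightarrow> real^'p^'p" where
  "diag_mat d = (\<chi> i j. if i = j then d $ i else 0)"

definition outer :: "real^'n \<Rightarrow> real^'n \<Rightarrow> real^'n^'n" where
  "outer u v = (\<chi> a b. u $ a * v $ b)"

definition pos_def :: "real^'n^'n \<Rightarrow> bool" where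
  "pos_def M \<longleftrightarrow> transpose M = M \<and> (\<forall>x. x \<noteq> 0 \<longrightarrow> x \<bullet> (M *v x) > 0)"

definition S_mat :: "real^'p^'n \<Rightarrow> real^'p^'p \<Rightarrow> real^'p \<Rightarrow> real^'n^'n" where
  "S_mat X Phi d = (1 / real CARD('p)) *\<^sub>R
     (\<Sum>j\<in>UNIV. outer (sqrt (d $ j) *\<^sub>R column j X - X *v column j Phi)
                      (sqrt (d $ j) *\<^sub>R column j X - X *v column j Phi))"

definition objective ::
  "real^'p^'n \<Rightarrow> real \<Rightarrow> real \<Rightarrow> (real^'p^'p) \<times> (real^'p) \<times> (real^'n^'n) \<Rightarrow> real" where
  "objective X lam1 lam2 z = (case z of (Phi, d, Theta) \<Rightarrow>
      - real CARD('n) * ln (det (diag_mat d))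
      - real CARD('p) * ln (det Theta)
      + trace (Theta ** S_mat X Phi d)
      + lam1 * (\<Sum>i\<in>UNIV. \<Sum>j\<in>UNIV. \<bar>Phi $ i $ j\<bar>)
      + lam2 * (\<Sum>i\<in>UNIV. \<Sum>j\<in>UNIV. if i \<noteq> j then \<bar>Theta $ i $ j\<bar> else 0))"

text \<open>Feasible sets of the three blocks (natural ordering of the DAG nodes = the
order on 'p).\<close>
definition Phi_set :: "(real^('p::{finite,linorder})^('p::{finite,linorder})) set" where
  "Phi_set = {Phi. \<forall>i j. j \<le> i \<longrightarrow> Phi $ i $ j = 0}"

definition D_set :: "(real^'p) set" where
  "D_set = {d. \<forall>j. d $ j > 0}"

definition Theta_set :: "real^'n^'n \<Rightarrow> (real^'n^'n) set" where
  "Theta_set A = {Theta. pos_def Theta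
       \<and> (\<forall>i j. i \<noteq> j \<and> A $ i $ j = 0 \<longrightarrow> Theta $ i $ j = 0)
       \<and> (\<forall>i. matrix_inv Theta $ i $ i = 1)}"

definition dom_f :: "real^'n^'n \<Rightarrow> ((real^('p::{finite,linorder})^('p::{finite,linorder})) \<times> (real^('p::{finite,linorder})) \<times> (real^'n^'n)) set" where
  "dom_f A = Phi_set \<times> D_set \<times> Theta_set A"

definition f_ext where
  "f_ext X lam1 lam2 A z = (if z \<in> dom_f A then ereal (objective X lam1 lam2 z) else \<infinity>)"

definition stationary_point where
  "stationary_point X lam1 lam2 A z \<longleftrightarrow> z \<in> dom_f A \<and>
     (\<forall>v. 0 \<le> Liminf (at_right 0)
        (\<lambda>t::real. (f_ext X lam1 lam2 A (z + t *\<^sub>R v) - f_ext X lam1 lam2 A z) / ereal t))"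

definition bcd_sequence where
  "bcd_sequence X lam1 lam2 A (s :: nat \<Rightarrow> (real^('p::{finite,linorder})^('p::{finite,linorder})) \<times> (real^('p::{finite,linorder})) \<times> (real^'n^'n)) \<longleftrightarrow>
     s 0 \<in> dom_f A \<and>
     (\<forall>t. case s t of (Phi, d, Theta) \<Rightarrow> case s (Suc t) of (Phi', d', Theta') \<Rightarrow>
        Phi' \<in> Phi_set \<and>
        (\<forall>P\<in>Phi_set. objective X lam1 lam2 (Phi', d, Theta) \<le> objective X lam1 lam2 (P, d, Theta)) \<and>
        d' \<in> D_set \<and>
        (\<forall>e\<in>D_set. objective X lam1 lam2 (Phi', d', Theta) \<le> objective X lam1 lam2 (Phi', e, Theta)) \<and>
        Theta' \<in> Theta_set A \<and>
        (\<forall>T\<in>Theta_set A. objective X lam1 lam2 (Phi', d', Theta') \<le> objective X lam1 lam2 (Phi', d', T)))"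

definition cluster_point :: "(nat \<Rightarrow> 'a::topological_space) \<Rightarrow> 'a \<Rightarrow> bool" where
  "cluster_point s z \<longleftrightarrow> (\<exists>r. strict_mono r \<and> (s \<circ> r) \<longlonglongrightarrow> z)"

end

theory Submission
  imports Defs
begin


definition qf :: "real^'n^'n \<Rightarrow> real^'n \<Rightarrow> real" where
  "qf M x = x \<bullet> (M *v x)"

definition rvec :: "real^'p^'n \<Rightarrow> real^'p^'p \<Rightarrow> real^'p \<Rightarrow> 'p \<Rightarrow> real^'n" where
  "rvec X Phi d j = sqrt (d $ j) *\<^sub>R column j X - X *v column j Phi"

definition L1 :: "real^'a^'b \<Rightarrow> real" where
  "L1 M = (\<Sum>i\<in>UNIV. \<Sum>j\<in>UNIV. \<bar>M $ i $ j\<bar>)"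

definition L1o :: "real^'a^'a \<Rightarrow> real" where
  "L1o M = (\<Sum>i\<in>UNIV. \<Sum>j\<in>UNIV. if i \<noteq> j then \<bar>M $ i $ j\<bar> else 0)"

lemma tendsto_det: "(A \<longlongrightarrow> A0) F \<Longrightarrow> ((\<lambda>x. det (A x :: real^'n^'n)) \<longlongrightarrow> det A0) F"
  unfolding det_def by (intro tendsto_intros)

lemma tendsto_qf: "(M \<longlongrightarrow> M0) F \<Longrightarrow> (x \<longlongrightarrow> x0) F \<Longrightarrow> ((\<lambda>t. qf (M t) (x t)) \<longlongrightarrow> qf M0 x0) F"
  unfolding qf_def inner_vec_def matrix_vector_mult_def by (simp, intro tendsto_intros)

lemma tendsto_rvec: "(Phi \<longlongrightarrow> Phi0) F \<Longrightarrow> (d \<longlongrightarrow> d0) F \<Longrightarrow>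
   ((\<lambda>t. rvec X (Phi t) (d t) j) \<longlongrightarrow> rvec X Phi0 d0 j) F"
  unfolding rvec_def column_def matrix_vector_mult_def
  by (rule vec_tendstoI, simp, intro tendsto_intros)

lemma tendsto_L1: "(M \<longlongrightarrow> M0) F \<Longrightarrow> ((\<lambda>t. L1 (M t)) \<longlongrightarrow> L1 M0) F"
  unfolding L1_def by (intro tendsto_intros)

lemma tendsto_L1o: "(M \<longlongrightarrow> M0) F \<Longrightarrow> ((\<lambda>t. L1o (M t)) \<longlongrightarrow> L1o M0) F"
  unfolding L1o_def
  apply (intro tendsto_sum)
  subgoal for i j by (cases "i = j") (auto intro!: tendsto_intros)
  done

lemma det_diag: "det (diag_mat d) = prod (\<lambda>i. d $ i) UNIV"
  by (subst det_diagonal) (auto simp: diag_mat_def)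


lemma qf_nonneg: "pos_def M \<Longrightarrow> 0 \<le> qf M x"
  unfolding pos_def_def qf_def by (cases "x = 0") (auto intro: less_imp_le)

lemma qf_inj:
  assumes "\<forall>x. x \<noteq> 0 \<longrightarrow> qf M x > 0"
  shows "det M \<noteq> 0"
proof -
  have "inj ((*v) M)"
  proof (rule injI)
    fix x y assume "M *v x = M *v y"
    then have "M *v (x - y) = 0" by (simp add: matrix_vector_mult_diff_distrib)
    then have "qf M (x - y) = 0" by (simp add: qf_def)
    show "x = y"
    proof (rule ccontr)
      assume "x \<noteq> y"
      then have "x - y \<noteq> 0" by simp
      with assms have "qf M (x - y) > 0" by auto
      with \<open>qf M (x - y) = 0\<close> show False by simp
    qed
  qed
  then show ?thesis
    using det_nz_iff_inj_gen[of "(*v) M"] by (simp add: matrix_vector_mul_linear_gen)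
qed

lemma scaleR_mv: "(c *\<^sub>R A) *v x = c *\<^sub>R (A *v (x::real^'a))"
  by (simp add: vec_eq_iff matrix_vector_mult_def sum_distrib_left mult_ac)

lemma qf_comb: "qf ((1 - t) *\<^sub>R mat 1 + t *\<^sub>R M) x = (1 - t) * (x \<bullet> x) + t * qf M x"
  unfolding qf_def
  by (simp add: matrix_vector_mult_add_rdistrib scaleR_mv inner_add_right)

lemma pd_det_pos:
  assumes "\<forall>x. x \<noteq> 0 \<longrightarrow> qf M x > 0"
  shows "det M > 0"
proof (rule ccontr)
  assume "\<not> det M > 0"
  define g where "g t = det ((1 - t) *\<^sub>R mat 1 + t *\<^sub>R M)" for t :: real
  have g0: "g 0 = 1" and g1: "g 1 = det M" by (simp_all add: g_def)
  have cont: "\<forall>t. 0 \<le> t \<and> t \<le> 1 \<longrightarrow> isCont g t"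
    unfolding g_def isCont_def by (intro allI impI tendsto_det tendsto_intros)
  obtain t where t: "0 \<le> t" "t \<le> 1" "g t = 0"
    using IVT2[of g 1 0 0] g0 g1 cont \<open>\<not> det M > 0\<close> by auto
  have "\<forall>x. x \<noteq> 0 \<longrightarrow> qf ((1 - t) *\<^sub>R mat 1 + t *\<^sub>R M) x > 0"
  proof (intro allI impI)
    fix x :: "real^'a" assume "x \<noteq> 0"
    then have "x \<bullet> x > 0" by simp
    moreover have "qf M x > 0" using assms \<open>x \<noteq> 0\<close> by auto
    ultimately have "(1 - t) * (x \<bullet> x) + t * qf M x > 0"
    proof (cases "t = 0")
      case True then show ?thesis using \<open>x \<bullet> x > 0\<close> by simp
    next
      case False
      then have "t * qf M x > 0" using t \<open>qf M x > 0\<close> by simp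
      moreover have "(1 - t) * (x \<bullet> x) \<ge> 0" using t \<open>x \<bullet> x > 0\<close> by simp
      ultimately show ?thesis by linarith
    qed
    then show "qf ((1 - t) *\<^sub>R mat 1 + t *\<^sub>R M) x > 0" by (simp only: qf_comb)
  qed
  from qf_inj[OF this] t show False by (simp add: g_def)
qed

lemma pos_def_det_pos: "pos_def M \<Longrightarrow> det M > 0"
  by (rule pd_det_pos) (auto simp: pos_def_def qf_def)



lemma inner_mv_sym: "transpose M = M \<Longrightarrow> x \<bullet> (M *v y) = (M *v x) \<bullet> (y::real^'a)"
  by (metis dot_lmul_matrix vector_transpose_matrix)

lemma quad_nonneg_imp:
  fixes b c :: real
  assumes "\<forall>s. 0 \<le> 2 * s * b + s\<^sup>2 * c" "c \<ge> 0" "b \<ge> 0"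
  shows "b = 0"
proof (rule ccontr)
  assume "b \<noteq> 0"
  then have bp: "b > 0" using assms by simp
  define s where "s = - b / (c + 1)"
  have c1: "c + 1 > 0" using assms by simp
  have sneg: "s < 0" using bp c1 by (simp add: s_def)
  have "s * c = - (b * (c / (c + 1)))" by (simp add: s_def)
  moreover have "c / (c + 1) \<le> 1" using c1 by simp
  moreover have "b * (c / (c + 1)) \<le> b * 1" by (rule mult_left_mono) (use bp \<open>c / (c + 1) \<le> 1\<close> in auto)
  ultimately have "s * c \<ge> - b" by simp
  then have "2 * b + s * c > 0" using bp by linarith
  then have "s * (2 * b + s * c) < 0" using sneg by (simp add: mult_neg_pos)
  moreover have "2 * s * b + s\<^sup>2 * c = s * (2 * b + s * c)" by (simp add: algebra_simps power2_eq_square)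
  moreover have "0 \<le> 2 * s * b + s\<^sup>2 * c" using assms by simp
  ultimately show False by simp
qed

lemma psd_det_imp_pd:
  assumes sym: "transpose M = M" and psd: "\<forall>x. qf M x \<ge> 0" and det: "det M \<noteq> 0"
  shows "pos_def M"
  unfolding pos_def_def
proof (intro conjI sym allI impI)
  fix x :: "real^'a" assume "x \<noteq> 0"
  show "x \<bullet> (M *v x) > 0"
  proof (rule ccontr)
    assume "\<not> x \<bullet> (M *v x) > 0"
    then have q0: "qf M x = 0" using psd by (simp add: qf_def) (meson antisym not_le psd qf_def)
    define y where "y = M *v x"
    have "\<forall>s. 0 \<le> 2 * s * (y \<bullet> y) + s\<^sup>2 * qf M y"
    proof
      fix s :: real
      have "0 \<le> qf M (x + s *\<^sub>R y)" using psd by simp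
      also have "qf M (x + s *\<^sub>R y) = qf M x + s * (x \<bullet> (M *v y)) + s * (y \<bullet> (M *v x)) + s\<^sup>2 * qf M y"
        unfolding qf_def
        by (simp add: matrix_vector_right_distrib matrix_vector_mult_scaleR inner_add_left inner_add_right
              algebra_simps power2_eq_square)
      also have "x \<bullet> (M *v y) = y \<bullet> y" using inner_mv_sym[OF sym, of x y] by (simp add: y_def)
      also have "y \<bullet> (M *v x) = y \<bullet> y" by (simp add: y_def)
      finally show "0 \<le> 2 * s * (y \<bullet> y) + s\<^sup>2 * qf M y" using q0 by simp
    qed
    then have "y \<bullet> y = 0" by (rule quad_nonneg_imp) (use psd in auto)
    then have "M *v x = 0" by (simp add: y_def)
    moreover have "inj ((*v) M)"
      using det det_nz_iff_inj_gen[of "(*v) M"] by (simp add: matrix_vector_mul_linear_gen)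
    ultimately show False using \<open>x \<noteq> 0\<close>
      by (metis injD matrix_vector_mult_0_right)
  qed
qed

lemma matrix_inv_cramer:
  fixes A :: "real^'n^'n"
  assumes "det A \<noteq> 0"
  shows "matrix_inv A $ k $ i = det (\<chi> a b. if b = k then column i (mat 1) $ a else A $ a $ b) / det A"
proof -
  have "invertible A" using assms invertible_det_nz by blast
  then have "\<exists>A'. A ** A' = mat 1 \<and> A' ** A = mat 1" unfolding invertible_def .
  then have inv: "A ** matrix_inv A = mat 1" unfolding matrix_inv_def by (rule someI_ex[THEN conjunct1])
  have "A *v column i (matrix_inv A) = column i (mat 1)"
  proof -
    have "(A ** matrix_inv A) $ a $ i = mat 1 $ a $ i" for a using inv by simp
    then show ?thesis
      by (simp add: vec_eq_iff matrix_vector_mult_def column_def matrix_matrix_mult_def)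
  qed
  then have "column i (matrix_inv A) = (\<chi> k. det(\<chi> a b. if b=k then column i (mat 1) $a else A$a$b) / det A)"
    using cramer[OF assms] by blast
  then have "column i (matrix_inv A) $ k = det(\<chi> a b. if b=k then column i (mat 1) $ a else A$a$b) / det A"
    by (simp only: vec_lambda_beta)
  then show ?thesis by (simp only: column_def vec_lambda_beta)
qed

lemma tendsto_matrix_inv_entry:
  fixes A :: "'b \<Rightarrow> real^'n^'n"
  assumes "(A \<longlongrightarrow> A0) F" "det A0 \<noteq> 0" "\<forall>x. det (A x) \<noteq> 0"
  shows "((\<lambda>x. matrix_inv (A x) $ k $ i) \<longlongrightarrow> matrix_inv A0 $ k $ i) F"
proof -
  have "((\<lambda>x. det (\<chi> a b. if b = k then column i (mat 1) $ a else A x $ a $ b) / det (A x)) \<longlongrightarrow>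
        det (\<chi> a b. if b = k then column i (mat 1) $ a else A0 $ a $ b) / det A0) F"
  proof (intro tendsto_divide tendsto_det assms(2))
    show "((\<lambda>x. \<chi> a b. if b = k then column i (mat 1) $ a else A x $ a $ b) \<longlongrightarrow>
           (\<chi> a b. if b = k then column i (mat 1) $ a else A0 $ a $ b)) F"
      apply (intro tendsto_vec_lambda)
      subgoal for a b by (cases "b = k") (auto intro!: tendsto_intros assms(1))
      done
    show "(A \<longlongrightarrow> A0) F" by (rule assms(1))
  qed
  moreover have "\<And>x. matrix_inv (A x) $ k $ i = det (\<chi> a b. if b = k then column i (mat 1) $ a else A x $ a $ b) / det (A x)"
    using assms(3) by (intro matrix_inv_cramer) auto
  ultimately show ?thesis using matrix_inv_cramer[OF assms(2), of k i] by simp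
qed



lemma trace_outer: "trace (M ** outer x x) = qf M x"
  unfolding trace_def matrix_matrix_mult_def outer_def qf_def inner_vec_def matrix_vector_mult_def
  by (simp add: sum_distrib_left mult_ac)

lemma trace_S: "trace (Theta ** S_mat (X::real^'p^'n) Phi d) = (1 / real CARD('p)) * (\<Sum>j\<in>UNIV. qf Theta (rvec X Phi d j))"
proof -
  let ?r = "\<lambda>j. rvec X Phi d j"
  let ?c = "1 / real CARD('p)"
  have e1: "trace (Theta ** S_mat X Phi d) = (\<Sum>i\<in>UNIV. \<Sum>k\<in>UNIV. Theta$i$k * (?c * (\<Sum>j\<in>UNIV. ?r j $ k * ?r j $ i)))"
    unfolding S_mat_def rvec_def[symmetric] by (simp add: trace_def matrix_matrix_mult_def outer_def)
  also have "\<dots> = (\<Sum>i\<in>UNIV. \<Sum>k\<in>UNIV. \<Sum>j\<in>UNIV. ?c * (?r j $ i * (Theta$i$k * ?r j $ k)))"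
    by (intro sum.cong refl) (simp add: sum_distrib_left mult_ac)
  also have "\<dots> = (\<Sum>i\<in>UNIV. \<Sum>j\<in>UNIV. \<Sum>k\<in>UNIV. ?c * (?r j $ i * (Theta$i$k * ?r j $ k)))"
    by (intro sum.cong refl) (rule sum.swap)
  also have "\<dots> = (\<Sum>j\<in>UNIV. \<Sum>i\<in>UNIV. \<Sum>k\<in>UNIV. ?c * (?r j $ i * (Theta$i$k * ?r j $ k)))"
    by (rule sum.swap)
  also have "\<dots> = ?c * (\<Sum>j\<in>UNIV. qf Theta (?r j))"
    by (simp add: qf_def inner_vec_def matrix_vector_mult_def sum_distrib_left)
  finally show ?thesis .
qed

lemma obj_eq: "objective (X::real^'p^'n) lam1 lam2 (Phi, d, Theta) =
   - real CARD('n) * ln (det (diag_mat d)) - real CARD('p) * ln (det Theta)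
   + (1 / real CARD('p)) * (\<Sum>j\<in>UNIV. qf Theta (rvec X Phi d j)) + lam1 * L1 Phi + lam2 * L1o Theta"
  unfolding objective_def trace_S L1_def L1o_def by simp

lemma column_add_scale: "column j (P + t *\<^sub>R V) = column j P + t *\<^sub>R column j (V::real^'a^'b)"
  by (simp add: column_def vec_eq_iff)

lemma rvec_shift: "rvec X (P + t *\<^sub>R V) (d + t *\<^sub>R W) j =
   rvec X P d j + (sqrt (d$j + t * W$j) - sqrt (d$j)) *\<^sub>R column j X - t *\<^sub>R (X *v column j V)"
  unfolding rvec_def column_add_scale
  by (simp add: matrix_vector_right_distrib matrix_vector_mult_scaleR algebra_simps)

lemma qf_addM: "qf (M + N) x = qf M x + qf N x"
  unfolding qf_def by (simp add: matrix_vector_mult_add_rdistrib inner_add_right)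

lemma qf_scaleM: "qf (c *\<^sub>R M) x = c * qf M x"
  unfolding qf_def by (simp add: scaleR_mv)

lemma qf_add: "qf M (x + y) = qf M x + qf M y + x \<bullet> (M *v y) + y \<bullet> (M *v x)"
  unfolding qf_def by (simp add: matrix_vector_right_distrib inner_add_left inner_add_right)

lemma mixed3: "qf M (x + y + z) - qf M (x + z) - qf M (x + y) + qf M x = y \<bullet> (M *v z) + z \<bullet> (M *v y)"
  by (simp add: qf_add matrix_vector_right_distrib inner_add_left inner_add_right)

lemma mv_uminus: "M *v (- x) = - (M *v (x::real^'a))"
  by (simp add: vec_eq_iff matrix_vector_mult_def sum_negf)

lemma mixed_qf:
  "qf (T0 + t *\<^sub>R V) (r + a *\<^sub>R U - t *\<^sub>R W) - qf (T0 + t *\<^sub>R V) r - qf T0 (r - t *\<^sub>R W)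
    - qf T0 (r + a *\<^sub>R U) + 2 * qf T0 r
   = t * (qf V (r + a *\<^sub>R U - t *\<^sub>R W) - qf V r - a * (U \<bullet> (T0 *v W) + W \<bullet> (T0 *v U)))"
proof -
  have e1: "r + a *\<^sub>R U - t *\<^sub>R W = r + a *\<^sub>R U + (- t) *\<^sub>R W" by simp
  have e2: "r - t *\<^sub>R W = r + (- t) *\<^sub>R W" by simp
  have m: "qf T0 (r + a *\<^sub>R U + (- t) *\<^sub>R W) - qf T0 (r + (- t) *\<^sub>R W) - qf T0 (r + a *\<^sub>R U) + qf T0 r
      = - (t * (a * (U \<bullet> (T0 *v W) + W \<bullet> (T0 *v U))))"
    unfolding mixed3 by (simp add: matrix_vector_mult_scaleR mv_uminus algebra_simps)
  show ?thesis
    unfolding qf_addM qf_scaleM e1 e2 using m by (simp only: right_diff_distrib)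
qed



abbreviation ob where "ob X l1 l2 P d T \<equiv> objective X l1 l2 (P, d, T)"

lemma ob_decomp:
  fixes X :: "real^'p^'n" and P V1 :: "real^'p^'p" and d V2 :: "real^'p" and T V3 :: "real^'n^'n" and t :: real
  defines "G \<equiv> \<lambda>j. qf V3 (rvec X (P + t *\<^sub>R V1) (d + t *\<^sub>R V2) j) - qf V3 (rvec X P d j)
      - (sqrt (d$j + t * V2$j) - sqrt (d$j)) * (column j X \<bullet> (T *v (X *v column j V1)) + (X *v column j V1) \<bullet> (T *v column j X))"
  shows "ob X l1 l2 (P + t *\<^sub>R V1) (d + t *\<^sub>R V2) (T + t *\<^sub>R V3) - ob X l1 l2 P d T =
    (ob X l1 l2 (P + t *\<^sub>R V1) d T - ob X l1 l2 P d T) + (ob X l1 l2 P (d + t *\<^sub>R V2) T - ob X l1 l2 P d T)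
    + (ob X l1 l2 P d (T + t *\<^sub>R V3) - ob X l1 l2 P d T) + (1 / real CARD('p)) * (t * (\<Sum>j\<in>UNIV. G j))"
proof -
  let ?T1 = "T + t *\<^sub>R V3"
  let ?r = "\<lambda>j. rvec X P d j"
  let ?a = "\<lambda>j. sqrt (d$j + t * V2$j) - sqrt (d$j)"
  let ?U = "\<lambda>j. column j X"
  let ?W = "\<lambda>j. X *v column j V1"
  have r11: "rvec X (P + t *\<^sub>R V1) (d + t *\<^sub>R V2) j = ?r j + ?a j *\<^sub>R ?U j - t *\<^sub>R ?W j" for j
    by (rule rvec_shift)
  have r10: "rvec X (P + t *\<^sub>R V1) d j = ?r j - t *\<^sub>R ?W j" for j
    using rvec_shift[of X P t V1 d 0 j] by simp
  have c0: "column j (0::real^'p^'p) = 0" for j by (simp add: column_def vec_eq_iff)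
  have r01: "rvec X P (d + t *\<^sub>R V2) j = ?r j + ?a j *\<^sub>R ?U j" for j
    using rvec_shift[of X P t 0 d V2 j] by (simp add: c0)
  have perj: "qf ?T1 (rvec X (P + t *\<^sub>R V1) (d + t *\<^sub>R V2) j) - qf T (?r j)
      - (qf T (rvec X (P + t *\<^sub>R V1) d j) - qf T (?r j))
      - (qf T (rvec X P (d + t *\<^sub>R V2) j) - qf T (?r j))
      - (qf ?T1 (?r j) - qf T (?r j)) = t * G j" for j
  proof -
    have m: "qf ?T1 (?r j + ?a j *\<^sub>R ?U j - t *\<^sub>R ?W j) - qf ?T1 (?r j) - qf T (?r j - t *\<^sub>R ?W j)
       - qf T (?r j + ?a j *\<^sub>R ?U j) + 2 * qf T (?r j)
      = t * (qf V3 (?r j + ?a j *\<^sub>R ?U j - t *\<^sub>R ?W j) - qf V3 (?r j) - ?a j * (?U j \<bullet> (T *v ?W j) + ?W j \<bullet> (T *v ?U j)))"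
      by (rule mixed_qf)
    show ?thesis unfolding G_def r11 r10 r01 using m by linarith
  qed
  have S0: "(\<Sum>j\<in>UNIV. qf ?T1 (rvec X (P + t *\<^sub>R V1) (d + t *\<^sub>R V2) j) - qf T (?r j)
      - (qf T (rvec X (P + t *\<^sub>R V1) d j) - qf T (?r j))
      - (qf T (rvec X P (d + t *\<^sub>R V2) j) - qf T (?r j))
      - (qf ?T1 (?r j) - qf T (?r j))) = t * (\<Sum>j\<in>UNIV. G j)"
    unfolding sum_distrib_left using perj by simp
  have S: "(\<Sum>j\<in>UNIV. qf ?T1 (rvec X (P + t *\<^sub>R V1) (d + t *\<^sub>R V2) j)) - (\<Sum>j\<in>UNIV. qf T (?r j))
      - ((\<Sum>j\<in>UNIV. qf T (rvec X (P + t *\<^sub>R V1) d j)) - (\<Sum>j\<in>UNIV. qf T (?r j)))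
      - ((\<Sum>j\<in>UNIV. qf T (rvec X P (d + t *\<^sub>R V2) j)) - (\<Sum>j\<in>UNIV. qf T (?r j)))
      - ((\<Sum>j\<in>UNIV. qf ?T1 (?r j)) - (\<Sum>j\<in>UNIV. qf T (?r j))) = t * (\<Sum>j\<in>UNIV. G j)"
    using S0 by (simp only: sum_subtractf)
  have S': "(1 / real CARD('p)) * (\<Sum>j\<in>UNIV. qf ?T1 (rvec X (P + t *\<^sub>R V1) (d + t *\<^sub>R V2) j)) - (1 / real CARD('p)) * (\<Sum>j\<in>UNIV. qf T (?r j))
      - ((1 / real CARD('p)) * (\<Sum>j\<in>UNIV. qf T (rvec X (P + t *\<^sub>R V1) d j)) - (1 / real CARD('p)) * (\<Sum>j\<in>UNIV. qf T (?r j)))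
      - ((1 / real CARD('p)) * (\<Sum>j\<in>UNIV. qf T (rvec X P (d + t *\<^sub>R V2) j)) - (1 / real CARD('p)) * (\<Sum>j\<in>UNIV. qf T (?r j)))
      - ((1 / real CARD('p)) * (\<Sum>j\<in>UNIV. qf ?T1 (?r j)) - (1 / real CARD('p)) * (\<Sum>j\<in>UNIV. qf T (?r j))) = (1 / real CARD('p)) * (t * (\<Sum>j\<in>UNIV. G j))"
    unfolding S[symmetric] by (simp only: right_diff_distrib)
  show ?thesis unfolding obj_eq using S' by linarith
qed

lemma tendsto_G:
  fixes X :: "real^'p^'n"
  shows "((\<lambda>t. (1 / real CARD('p)) * (\<Sum>j\<in>UNIV. qf V3 (rvec X (P + t *\<^sub>R V1) (d + t *\<^sub>R V2) j) - qf V3 (rvec X P d j)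
      - (sqrt (d$j + t * V2$j) - sqrt (d$j)) * (column j X \<bullet> (T *v (X *v column j V1)) + (X *v column j V1) \<bullet> (T *v column j X))))
     \<longlongrightarrow> 0) (at_right 0)"
proof -
  have "((\<lambda>t. P + t *\<^sub>R V1) \<longlongrightarrow> P + 0 *\<^sub>R V1) (at_right 0)" by (intro tendsto_intros)
  then have p: "((\<lambda>t. P + t *\<^sub>R V1) \<longlongrightarrow> P) (at_right 0)" by simp
  have "((\<lambda>t. d + t *\<^sub>R V2) \<longlongrightarrow> d + 0 *\<^sub>R V2) (at_right 0)" by (intro tendsto_intros)
  then have dd: "((\<lambda>t. d + t *\<^sub>R V2) \<longlongrightarrow> d) (at_right 0)" by simp
  have "((\<lambda>t. (1 / real CARD('p)) * (\<Sum>j\<in>UNIV. qf V3 (rvec X (P + t *\<^sub>R V1) (d + t *\<^sub>R V2) j) - qf V3 (rvec X P d j)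
      - (sqrt (d$j + t * V2$j) - sqrt (d$j)) * (column j X \<bullet> (T *v (X *v column j V1)) + (X *v column j V1) \<bullet> (T *v column j X))))
     \<longlongrightarrow> (1 / real CARD('p)) * (\<Sum>j\<in>UNIV. qf V3 (rvec X P d j) - qf V3 (rvec X P d j)
      - (sqrt (d$j + 0 * V2$j) - sqrt (d$j)) * (column j X \<bullet> (T *v (X *v column j V1)) + (X *v column j V1) \<bullet> (T *v column j X)))) (at_right 0)"
    by (intro tendsto_intros tendsto_qf tendsto_rvec p dd)
  then show ?thesis by simp
qed

lemma cw_dir:
  fixes X :: "real^'p::{finite,linorder}^'n" and A :: "real^'n^'n"
    and V1 :: "real^('p::{finite,linorder})^('p::{finite,linorder})" and V2 :: "real^('p::{finite,linorder})" and V3 :: "real^'n^'n"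
  assumes z: "(P, d, T) \<in> dom_f A"
    and B1: "\<forall>Q\<in>Phi_set. ob X l1 l2 P d T \<le> ob X l1 l2 Q d T"
    and B2: "\<forall>e\<in>D_set. ob X l1 l2 P d T \<le> ob X l1 l2 P e T"
    and B3: "\<forall>R\<in>Theta_set A. ob X l1 l2 P d T \<le> ob X l1 l2 P d R"
  shows "0 \<le> Liminf (at_right 0) (\<lambda>t. (f_ext X l1 l2 A ((P, d, T) + t *\<^sub>R (V1, V2, V3)) - f_ext X l1 l2 A (P, d, T)) / ereal t)"
proof -
  define v where "v = (V1, V2, V3)"
  define G where "G = (\<lambda>t. (1 / real CARD('p)) * (\<Sum>j\<in>UNIV. qf V3 (rvec X (P + t *\<^sub>R V1) (d + t *\<^sub>R V2) j) - qf V3 (rvec X P d j)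
      - (sqrt (d$j + t * V2$j) - sqrt (d$j)) * (column j X \<bullet> (T *v (X *v column j V1)) + (X *v column j V1) \<bullet> (T *v column j X))))"
  have lim: "(G \<longlongrightarrow> 0) (at_right 0)" unfolding G_def by (rule tendsto_G)
  have dec: "ob X l1 l2 (P + t *\<^sub>R V1) (d + t *\<^sub>R V2) (T + t *\<^sub>R V3) - ob X l1 l2 P d T =
    (ob X l1 l2 (P + t *\<^sub>R V1) d T - ob X l1 l2 P d T) + (ob X l1 l2 P (d + t *\<^sub>R V2) T - ob X l1 l2 P d T)
    + (ob X l1 l2 P d (T + t *\<^sub>R V3) - ob X l1 l2 P d T) + t * G t" for t
    using ob_decomp[of X l1 l2 P t V1 d V2 T V3] unfolding G_def by (simp add: ac_simps)
  have "0 \<le> Liminf (at_right 0) (\<lambda>t. (f_ext X l1 l2 A ((P, d, T) + t *\<^sub>R v) - f_ext X l1 l2 A (P, d, T)) / ereal t)"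
    unfolding le_Liminf_iff
  proof (intro allI impI)
    fix y :: ereal assume "y < 0"
    obtain y' where y': "y' < 0" "y \<le> ereal y'"
    proof (cases y)
      case (real r) then show ?thesis using that \<open>y < 0\<close> by auto
    next
      case PInf then show ?thesis using \<open>y < 0\<close> by simp
    next
      case MInf then show ?thesis using that[of "-1"] by simp
    qed
    have ev1: "eventually (\<lambda>t. y' < G t) (at_right 0)" using order_tendstoD(1)[OF lim y'(1)] .
    have ev2: "eventually (\<lambda>t. 0 < t) (at_right (0::real))" by (rule eventually_at_right_less)
    show "eventually (\<lambda>t. y < (f_ext X l1 l2 A ((P, d, T) + t *\<^sub>R v) - f_ext X l1 l2 A (P, d, T)) / ereal t) (at_right 0)"
      using eventually_conj[OF ev1 ev2]
    proof (rule eventually_mono)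
      fix t :: real assume t: "y' < G t \<and> 0 < t"
      have zt: "(P, d, T) + t *\<^sub>R v = (P + t *\<^sub>R V1, d + t *\<^sub>R V2, T + t *\<^sub>R V3)" by (simp add: v_def)
      have fz: "f_ext X l1 l2 A (P, d, T) = ereal (ob X l1 l2 P d T)" using z by (simp add: f_ext_def)
      show "y < (f_ext X l1 l2 A ((P, d, T) + t *\<^sub>R v) - f_ext X l1 l2 A (P, d, T)) / ereal t"
      proof (cases "(P + t *\<^sub>R V1, d + t *\<^sub>R V2, T + t *\<^sub>R V3) \<in> dom_f A")
        case True
        then have m: "P + t *\<^sub>R V1 \<in> Phi_set" "d + t *\<^sub>R V2 \<in> D_set" "T + t *\<^sub>R V3 \<in> Theta_set A"
          by (auto simp: dom_f_def)
        have "ob X l1 l2 P d T \<le> ob X l1 l2 (P + t *\<^sub>R V1) d T" using B1 m(1) by blast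
        moreover have "ob X l1 l2 P d T \<le> ob X l1 l2 P (d + t *\<^sub>R V2) T" using B2 m(2) by blast
        moreover have "ob X l1 l2 P d T \<le> ob X l1 l2 P d (T + t *\<^sub>R V3)" using B3 m(3) by blast
        ultimately have "t * G t \<le> ob X l1 l2 (P + t *\<^sub>R V1) (d + t *\<^sub>R V2) (T + t *\<^sub>R V3) - ob X l1 l2 P d T"
          using dec[of t] by linarith
        then have "G t \<le> (ob X l1 l2 (P + t *\<^sub>R V1) (d + t *\<^sub>R V2) (T + t *\<^sub>R V3) - ob X l1 l2 P d T) / t"
          using t by (simp add: pos_le_divide_eq mult.commute)
        then have "y' < (ob X l1 l2 (P + t *\<^sub>R V1) (d + t *\<^sub>R V2) (T + t *\<^sub>R V3) - ob X l1 l2 P d T) / t"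
          using t by linarith
        then show ?thesis using True t y'(2) unfolding zt fz
          by (simp add: f_ext_def) (meson ereal_less(2) le_less_trans ereal_less_eq(3) less_ereal.simps(1))
      next
        case False
        have fi: "f_ext X l1 l2 A (P + t *\<^sub>R V1, d + t *\<^sub>R V2, T + t *\<^sub>R V3) = \<infinity>"
          using False by (simp add: f_ext_def)
        have "(f_ext X l1 l2 A ((P, d, T) + t *\<^sub>R v) - f_ext X l1 l2 A (P, d, T)) / ereal t = \<infinity>"
          unfolding zt fi fz using t by (simp add: divide_ereal_def)
        moreover have "y < \<infinity>" using \<open>y < 0\<close> by (cases y) auto
        ultimately show ?thesis by simp
      qed
    qed
  qed
  then show ?thesis by (simp add: v_def)
qed

lemma cw_stationary:
  fixes X :: "real^'p::{finite,linorder}^'n" and A :: "real^'n^'n"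
  assumes z: "(P, d, T) \<in> dom_f A"
    and B1: "\<forall>Q\<in>Phi_set. ob X l1 l2 P d T \<le> ob X l1 l2 Q d T"
    and B2: "\<forall>e\<in>D_set. ob X l1 l2 P d T \<le> ob X l1 l2 P e T"
    and B3: "\<forall>R\<in>Theta_set A. ob X l1 l2 P d T \<le> ob X l1 l2 P d R"
  shows "stationary_point X l1 l2 A (P, d, T)"
  unfolding stationary_point_def
  apply (intro conjI z allI)
  subgoal for v by (cases v) (simp only:, rule cw_dir[OF z B1 B2 B3])
  done



lemma tendsto_diag: "(d \<longlongrightarrow> d0) F \<Longrightarrow> ((\<lambda>x. diag_mat (d x)) \<longlongrightarrow> diag_mat d0) F"
  unfolding diag_mat_def
  apply (intro tendsto_vec_lambda)
  subgoal for i j by (cases "i = j") (auto intro!: tendsto_intros)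
  done

lemma det_diag_pos: "d \<in> D_set \<Longrightarrow> det (diag_mat d) > 0"
  by (simp add: det_diag D_set_def prod_pos)

lemma tendsto_ob:
  fixes X :: "real^'p^'n"
  assumes "(Pk \<longlongrightarrow> P0) F" "(dk \<longlongrightarrow> d0) F" "(Tk \<longlongrightarrow> T0) F" "det (diag_mat d0) > 0" "det T0 > 0"
  shows "((\<lambda>x. ob X l1 l2 (Pk x) (dk x) (Tk x)) \<longlongrightarrow> ob X l1 l2 P0 d0 T0) F"
  unfolding obj_eq
  by (intro tendsto_intros tendsto_det tendsto_diag tendsto_qf tendsto_rvec tendsto_L1 tendsto_L1o assms(1-3))
     (use assms(4,5) in auto)

lemma L1_nonneg: "0 \<le> L1 M"
  by (simp add: L1_def sum_nonneg)

lemma LB: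
  fixes X :: "real^'p^'n"
  assumes "Theta \<in> Theta_set A" "l2 > 0"
  shows "ob X l1 l2 Phi d Theta \<ge> - real CARD('n) * ln (det (diag_mat d)) - real CARD('p) * ln (det Theta) + l1 * L1 Phi"
proof -
  have "pos_def Theta" using assms by (simp add: Theta_set_def)
  then have "0 \<le> (\<Sum>j\<in>UNIV. qf Theta (rvec X Phi d j))" by (intro sum_nonneg qf_nonneg)
  then have "0 \<le> (1 / real CARD('p)) * (\<Sum>j\<in>UNIV. qf Theta (rvec X Phi d j))" by simp
  moreover have "0 \<le> l2 * L1o Theta" using assms by (simp add: L1o_def sum_nonneg)
  ultimately show ?thesis unfolding obj_eq by linarith
qed

lemma norm_le_L1: "norm (M::real^'a^'b) \<le> L1 M"
proof -
  have "norm M \<le> (\<Sum>i\<in>UNIV. norm (M $ i))" unfolding norm_vec_def by (rule L2_set_le_sum) simp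
  also have "\<dots> \<le> (\<Sum>i\<in>UNIV. \<Sum>j\<in>UNIV. \<bar>M $ i $ j\<bar>)" by (intro sum_mono norm_le_l1_cart)
  finally show ?thesis by (simp add: L1_def)
qed

lemma bcd_step:
  assumes "bcd_sequence X l1 l2 A s"
  shows "fst (s (Suc t)) \<in> Phi_set \<and>
    (\<forall>Q\<in>Phi_set. ob X l1 l2 (fst (s (Suc t))) (fst (snd (s t))) (snd (snd (s t))) \<le> ob X l1 l2 Q (fst (snd (s t))) (snd (snd (s t)))) \<and>
    fst (snd (s (Suc t))) \<in> D_set \<and>
    (\<forall>e\<in>D_set. ob X l1 l2 (fst (s (Suc t))) (fst (snd (s (Suc t)))) (snd (snd (s t))) \<le> ob X l1 l2 (fst (s (Suc t))) e (snd (snd (s t)))) \<and>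
    snd (snd (s (Suc t))) \<in> Theta_set A \<and>
    (\<forall>R\<in>Theta_set A. ob X l1 l2 (fst (s (Suc t))) (fst (snd (s (Suc t)))) (snd (snd (s (Suc t)))) \<le> ob X l1 l2 (fst (s (Suc t))) (fst (snd (s (Suc t)))) R)"
proof -
  obtain a b c where st: "s t = (a, b, c)" by (cases "s t") auto
  obtain a' b' c' where st': "s (Suc t) = (a', b', c')" by (cases "s (Suc t)") auto
  show ?thesis
    using assms unfolding bcd_sequence_def
    apply (elim conjE)
    apply (drule spec[where x=t])
    apply (simp add: st st')
    done
qed

lemma avg_aux:
  fixes q q1 q2 l la lb a b c :: real
  assumes "q < (q1 + q2) / 2" "l \<le> (la + lb) / 2"
  shows "a - b + q + l + c < ((a - b + q1 + la + c) + (a - b + q2 + lb + c)) / 2"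
proof -
  have "2 * q < q1 + q2" "2 * l \<le> la + lb" using assms by simp_all
  then show ?thesis by (simp add: field_simps)
qed

lemma mid_unique:
  fixes X :: "real^'p::{finite,linorder}^'n"
  assumes pd: "pos_def T" and P1: "P1 \<in> Phi_set" and P2: "P2 \<in> Phi_set"
    and m1: "\<forall>Q\<in>Phi_set. ob X l1 l2 P1 d T \<le> ob X l1 l2 Q d T"
    and eq: "ob X l1 l2 P2 d T = ob X l1 l2 P1 d T" and l1: "l1 \<ge> 0"
  shows "X *v column j P2 = X *v column j P1"
proof (rule ccontr)
  assume ne: "X *v column j P2 \<noteq> X *v column j P1"
  define M where "M = (1/2) *\<^sub>R (P1 + P2)"
  have MP: "M \<in> Phi_set" using P1 P2 by (simp add: Phi_set_def M_def)
  have rM: "rvec X M d i = (1/2) *\<^sub>R (rvec X P1 d i + rvec X P2 d i)" for i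
    unfolding rvec_def M_def
    by (simp add: column_def vec_eq_iff matrix_vector_mult_def sum_distrib_left algebra_simps
        sum.distrib[symmetric])
  have qs: "qf T (c *\<^sub>R x) = c * c * qf T x" for c x
    unfolding qf_def by (simp add: matrix_vector_mult_scaleR)
  have qd: "qf T (a - b) = qf T a + qf T b - a \<bullet> (T *v b) - b \<bullet> (T *v a)" for a b
    unfolding qf_def by (simp add: matrix_vector_mult_diff_distrib inner_diff_left inner_diff_right)
  have qmid: "qf T ((1/2) *\<^sub>R (a + b)) = (qf T a + qf T b) / 2 - qf T (a - b) / 4" for a b :: "real^'n"
    unfolding qs qf_add qd by (simp add: field_simps)
  have diffj: "rvec X P1 d j - rvec X P2 d j = X *v column j P2 - X *v column j P1"
    unfolding rvec_def by simp
  have pos: "0 < (\<Sum>i\<in>UNIV. qf T (rvec X P1 d i - rvec X P2 d i))"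
  proof (rule sum_pos2[where i=j])
    show "0 < qf T (rvec X P1 d j - rvec X P2 d j)"
      unfolding diffj qf_def using pd ne by (simp add: pos_def_def)
    show "\<And>i. i \<in> UNIV \<Longrightarrow> 0 \<le> qf T (rvec X P1 d i - rvec X P2 d i)"
      using qf_nonneg[OF pd] by blast
  qed auto
  have sq: "(\<Sum>i\<in>UNIV. qf T (rvec X M d i)) =
      ((\<Sum>i\<in>UNIV. qf T (rvec X P1 d i)) + (\<Sum>i\<in>UNIV. qf T (rvec X P2 d i))) / 2
      - (\<Sum>i\<in>UNIV. qf T (rvec X P1 d i - rvec X P2 d i)) / 4"
    unfolding rM qmid by (simp only: sum_subtractf sum_divide_distrib[symmetric] sum.distrib)
  have sqlt: "(1 / real CARD('p)) * (\<Sum>i\<in>UNIV. qf T (rvec X M d i)) <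
      ((1 / real CARD('p)) * (\<Sum>i\<in>UNIV. qf T (rvec X P1 d i)) + (1 / real CARD('p)) * (\<Sum>i\<in>UNIV. qf T (rvec X P2 d i))) / 2"
    unfolding sq using pos by (simp add: field_simps)
  have "L1 M \<le> (L1 P1 + L1 P2) / 2"
  proof -
    have "\<bar>M $ a $ b\<bar> \<le> (\<bar>P1 $ a $ b\<bar> + \<bar>P2 $ a $ b\<bar>) / 2" for a b
      unfolding M_def by (simp add: abs_triangle_ineq divide_right_mono)
    then have "L1 M \<le> (\<Sum>a\<in>UNIV. \<Sum>b\<in>UNIV. (\<bar>P1 $ a $ b\<bar> + \<bar>P2 $ a $ b\<bar>) / 2)"
      unfolding L1_def by (intro sum_mono) auto
    also have "\<dots> = (L1 P1 + L1 P2) / 2"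
      by (simp only: L1_def sum_divide_distrib[symmetric] sum.distrib)
    finally show ?thesis .
  qed
  then have "l1 * L1 M \<le> (l1 * L1 P1 + l1 * L1 P2) / 2" using l1
    by (metis (no_types) add_divide_distrib distrib_left mult_left_mono times_divide_eq_right)
  then have "ob X l1 l2 M d T < (ob X l1 l2 P1 d T + ob X l1 l2 P2 d T) / 2"
    unfolding obj_eq using avg_aux[OF sqlt \<open>l1 * L1 M \<le> (l1 * L1 P1 + l1 * L1 P2) / 2\<close>,
      of "- real CARD('n) * ln (det (diag_mat d))" "real CARD('p) * ln (det T)" "l2 * L1o T"]
    by simp
  then have "ob X l1 l2 M d T < ob X l1 l2 P1 d T" using eq by simp
  with m1 MP show False by fastforce
qed



lemma main_all:
  fixes X :: "real^'p::{finite,linorder}^'n" and A :: "real^'n^'n"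
  assumes l1: "l1 > 0" and l2: "l2 > 0" and bcd: "bcd_sequence X l1 l2 A s" and cp: "cluster_point s z"
  shows "stationary_point X l1 l2 A z"
proof -
  define P where "P t = fst (s t)" for t
  define D where "D t = fst (snd (s t))" for t
  define T where "T t = snd (snd (s t))" for t
  define F where "F t = ob X l1 l2 (P t) (D t) (T t)" for t
  have s_eq: "s t = (P t, D t, T t)" for t by (simp add: P_def D_def T_def)
  have step: "P (Suc t) \<in> Phi_set" "\<forall>Q\<in>Phi_set. ob X l1 l2 (P (Suc t)) (D t) (T t) \<le> ob X l1 l2 Q (D t) (T t)"
    "D (Suc t) \<in> D_set" "\<forall>e\<in>D_set. ob X l1 l2 (P (Suc t)) (D (Suc t)) (T t) \<le> ob X l1 l2 (P (Suc t)) e (T t)"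
    "T (Suc t) \<in> Theta_set A" "\<forall>R\<in>Theta_set A. F (Suc t) \<le> ob X l1 l2 (P (Suc t)) (D (Suc t)) R" for t
    using bcd_step[OF bcd, of t] unfolding P_def D_def T_def F_def by auto
  have dom: "P t \<in> Phi_set \<and> D t \<in> D_set \<and> T t \<in> Theta_set A" for t
  proof (cases t)
    case 0 then show ?thesis using bcd s_eq[of 0] by (auto simp: bcd_sequence_def dom_f_def)
  next
    case (Suc m) then show ?thesis using step[of m] by simp
  qed
  have desc: "F (Suc t) \<le> F t" for t
  proof -
    have "F (Suc t) \<le> ob X l1 l2 (P (Suc t)) (D (Suc t)) (T t)" using step(6)[of t] dom[of t] by blast
    also have "\<dots> \<le> ob X l1 l2 (P (Suc t)) (D t) (T t)" using step(4)[of t] dom[of t] by blast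
    also have "\<dots> \<le> F t" using step(2)[of t] dom[of t] unfolding F_def by blast
    finally show ?thesis .
  qed
  have decF: "decseq F" by (rule decseq_SucI) (rule desc)
  have F0: "F t \<le> F 0" for t using decseqD[OF decF, of 0 t] by simp
  obtain r where r: "strict_mono r" and lim: "(s \<circ> r) \<longlonglongrightarrow> z" using cp unfolding cluster_point_def by blast
  obtain Ps ds Ts where z: "z = (Ps, ds, Ts)" by (cases z) auto
  have limP: "(\<lambda>k. P (r k)) \<longlonglongrightarrow> Ps" using tendsto_fst[OF lim] unfolding z P_def o_def by simp
  have limD: "(\<lambda>k. D (r k)) \<longlonglongrightarrow> ds" using tendsto_fst[OF tendsto_snd[OF lim]] unfolding z D_def o_def by simp
  have limT: "(\<lambda>k. T (r k)) \<longlonglongrightarrow> Ts" using tendsto_snd[OF tendsto_snd[OF lim]] unfolding z T_def o_def by simp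
  have pdT: "pos_def (T t)" for t using dom[of t] by (simp add: Theta_set_def)
  have detT: "det (T t) > 0" for t using pos_def_det_pos[OF pdT] .
  have Dpos: "D t $ i > 0" for t i using dom[of t] by (simp add: D_set_def)
  have Dne: "D t $ i \<noteq> 0" for t i using Dpos[of t i] by simp
  define n where "n = real CARD('n)"
  define p where "p = real CARD('p)"
  have npos: "n > 0" "p > 0" by (simp_all add: n_def p_def)
  have LBt: "- n * (\<Sum>i\<in>UNIV. ln (D t $ i)) - p * ln (det (T t)) \<le> F 0" for t
  proof -
    have Tin: "T t \<in> Theta_set A" using dom[of t] by simp
    have "ob X l1 l2 (P t) (D t) (T t) \<ge> - real CARD('n) * ln (det (diag_mat (D t))) - real CARD('p) * ln (det (T t)) + l1 * L1 (P t)"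
      by (rule LB[OF Tin l2])
    then have "- n * ln (det (diag_mat (D t))) - p * ln (det (T t)) + l1 * L1 (P t) \<le> F t"
      unfolding F_def n_def p_def by simp
    moreover have "0 \<le> l1 * L1 (P t)" using l1 L1_nonneg[of "P t"] by (intro mult_nonneg_nonneg) auto
    moreover have "ln (det (diag_mat (D t))) = (\<Sum>i\<in>UNIV. ln (D t $ i))"
      by (simp add: det_diag ln_prod Dne)
    ultimately show ?thesis using F0[of t] by simp
  qed
  define K0 where "K0 = (\<Sum>i\<in>UNIV. \<bar>ds $ i\<bar>) + 1"
  have K0: "ds $ i + 1 \<le> K0" for i
  proof -
    have "ds $ i \<le> \<bar>ds $ i\<bar>" by simp
    also have "\<bar>ds $ i\<bar> \<le> (\<Sum>i\<in>UNIV. \<bar>ds $ i\<bar>)" by (rule member_le_sum) auto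
    finally show ?thesis unfolding K0_def by simp
  qed
  have K0pos: "K0 \<ge> 1" unfolding K0_def by (simp add: sum_nonneg)
  have limDi: "(\<lambda>k. D (r k) $ i) \<longlonglongrightarrow> ds $ i" for i using limD by (rule tendsto_vec_nth)
  have ev1: "eventually (\<lambda>k. \<forall>i. D (r k) $ i < ds $ i + 1) sequentially"
    by (rule eventually_all_finite) (intro allI order_tendstoD(2)[OF limDi], simp)
  have limdet: "(\<lambda>k. det (T (r k))) \<longlonglongrightarrow> det Ts" using limT by (rule tendsto_det)
  have ev2: "eventually (\<lambda>k. det (T (r k)) < det Ts + 1) sequentially"
    using order_tendstoD(2)[OF limdet] by simp
  have lnsum: "(\<Sum>i\<in>S. ln (D (r k) $ i)) \<le> p * K0" if "\<forall>i. D (r k) $ i < ds $ i + 1" for k S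
  proof -
    have "ln (D (r k) $ i) \<le> K0" for i
    proof -
      have "ln (D (r k) $ i) \<le> D (r k) $ i - 1" by (rule ln_le_minus_one) (rule Dpos)
      then show ?thesis using that[rule_format, of i] K0[of i] by linarith
    qed
    then have "(\<Sum>i\<in>S. ln (D (r k) $ i)) \<le> of_nat (card S) * K0" by (rule sum_bounded_above)
    also have "\<dots> \<le> p * K0" unfolding p_def
      using K0pos by (intro mult_right_mono) (simp_all add: card_mono)
    finally show ?thesis .
  qed
  define K where "K = F 0 + p * (\<bar>det Ts\<bar> + 1) + n * (p * K0)"
  have Dlow: "exp (- K / n) \<le> ds $ j" for j
  proof (rule tendsto_lowerbound[OF limDi])
    show "eventually (\<lambda>k. exp (- K / n) \<le> D (r k) $ j) sequentially"
      using eventually_conj[OF ev1 ev2]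
    proof (rule eventually_mono)
      fix k assume h: "(\<forall>i. D (r k) $ i < ds $ i + 1) \<and> det (T (r k)) < det Ts + 1"
      have split: "(\<Sum>i\<in>UNIV. ln (D (r k) $ i)) = ln (D (r k) $ j) + (\<Sum>i\<in>UNIV - {j}. ln (D (r k) $ i))"
        by (rule sum.remove) auto
      have S1: "n * (\<Sum>i\<in>UNIV - {j}. ln (D (r k) $ i)) \<le> n * (p * K0)"
        using lnsum[of k "UNIV - {j}"] h npos by (intro mult_left_mono) auto
      have lT: "ln (det (T (r k))) \<le> \<bar>det Ts\<bar> + 1"
        using ln_le_minus_one[OF detT[of "r k"]] h by linarith
      have S2: "p * ln (det (T (r k))) \<le> p * (\<bar>det Ts\<bar> + 1)"
        using lT npos by (intro mult_left_mono) auto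
      have "- n * (\<Sum>i\<in>UNIV. ln (D (r k) $ i)) - p * ln (det (T (r k))) \<le> F 0" by (rule LBt)
      then have "- n * ln (D (r k) $ j) \<le> K"
        unfolding split K_def using S1 S2 by (simp add: algebra_simps)
      then have "- K \<le> ln (D (r k) $ j) * n" by (simp add: mult.commute)
      from divide_right_mono[OF this, of n] npos(1) have "- K / n \<le> ln (D (r k) $ j)" by simp
      then have "exp (- K / n) \<le> exp (ln (D (r k) $ j))" by simp
      then show "exp (- K / n) \<le> D (r k) $ j" using Dpos by simp
    qed
  qed simp
  have dsD: "ds \<in> D_set" unfolding D_set_def using Dlow by (auto intro: less_le_trans[OF exp_gt_zero])
  define K' where "K' = F 0 + n * (p * K0)"
  have Tlow: "exp (- K' / p) \<le> det Ts"
  proof (rule tendsto_lowerbound[OF limdet])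
    show "eventually (\<lambda>k. exp (- K' / p) \<le> det (T (r k))) sequentially"
      using ev1
    proof (rule eventually_mono)
      fix k assume h: "\<forall>i. D (r k) $ i < ds $ i + 1"
      have S1: "n * (\<Sum>i\<in>UNIV. ln (D (r k) $ i)) \<le> n * (p * K0)"
        using lnsum[of k UNIV] h npos by (intro mult_left_mono) auto
      have "- n * (\<Sum>i\<in>UNIV. ln (D (r k) $ i)) - p * ln (det (T (r k))) \<le> F 0" by (rule LBt)
      then have "- p * ln (det (T (r k))) \<le> K'"
        unfolding K'_def using S1 by (simp add: algebra_simps)
      then have "- K' \<le> ln (det (T (r k))) * p" by (simp add: mult.commute)
      from divide_right_mono[OF this, of p] npos(2) have "- K' / p \<le> ln (det (T (r k)))" by simp
      then have "exp (- K' / p) \<le> exp (ln (det (T (r k))))" by simp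
      then show "exp (- K' / p) \<le> det (T (r k))" using detT by simp
    qed
  qed simp
  have detTs: "det Ts > 0" using Tlow by (rule less_le_trans[OF exp_gt_zero])
  have TsT: "Ts \<in> Theta_set A"
  proof -
    have entry: "(\<lambda>k. T (r k) $ i $ j) \<longlonglongrightarrow> Ts $ i $ j" for i j
      by (intro tendsto_vec_nth limT)
    have sym: "transpose Ts = Ts"
    proof -
      have "Ts $ i $ j = Ts $ j $ i" for i j
      proof -
        have "T (r k) $ i $ j = T (r k) $ j $ i" for k
        proof -
          have tr: "transpose (T (r k)) = T (r k)" using pdT[of "r k"] unfolding pos_def_def by blast
          have "T (r k) $ i $ j = transpose (T (r k)) $ i $ j" using tr by simp
          also have "\<dots> = T (r k) $ j $ i" by (simp add: transpose_def)
          finally show ?thesis .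
        qed
        then have "(\<lambda>k. T (r k) $ i $ j) \<longlonglongrightarrow> Ts $ j $ i" using entry[of j i] by simp
        then show ?thesis using entry[of i j] by (rule LIMSEQ_unique[rotated])
      qed
      then show ?thesis by (simp add: vec_eq_iff transpose_def)
    qed
    have psd: "\<forall>x. qf Ts x \<ge> 0"
    proof
      fix x
      have "(\<lambda>k. qf (T (r k)) x) \<longlonglongrightarrow> qf Ts x" by (intro tendsto_qf limT tendsto_const)
      then show "qf Ts x \<ge> 0" by (rule tendsto_lowerbound) (auto intro!: always_eventually qf_nonneg pdT)
    qed
    have pd: "pos_def Ts" using psd_det_imp_pd[OF sym psd] detTs by simp
    have pat: "Ts $ i $ j = 0" if "i \<noteq> j" "A $ i $ j = 0" for i j
    proof -
      have "T (r k) $ i $ j = 0" for k using dom[of "r k"] that by (simp add: Theta_set_def)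
      then have "(\<lambda>k. T (r k) $ i $ j) \<longlonglongrightarrow> 0" by simp
      then show ?thesis using entry[of i j] LIMSEQ_unique by blast
    qed
    have inv: "matrix_inv Ts $ i $ i = 1" for i
    proof -
      have "(\<lambda>k. matrix_inv (T (r k)) $ i $ i) \<longlonglongrightarrow> matrix_inv Ts $ i $ i"
        using tendsto_matrix_inv_entry[OF limT] detTs detT by (simp add: less_imp_neq[symmetric])
      moreover have "matrix_inv (T (r k)) $ i $ i = 1" for k using dom[of "r k"] by (simp add: Theta_set_def)
      ultimately have "(\<lambda>k. 1::real) \<longlonglongrightarrow> matrix_inv Ts $ i $ i" by simp
      then show ?thesis using LIMSEQ_unique[OF _ tendsto_const] by metis
    qed
    show ?thesis unfolding Theta_set_def using pd pat inv by blast
  qed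
  have PsP: "Ps \<in> Phi_set"
  proof -
    have "Ps $ i $ j = 0" if "j \<le> i" for i j
    proof -
      have "P (r k) $ i $ j = 0" for k using dom[of "r k"] that by (simp add: Phi_set_def)
      then have "(\<lambda>k. P (r k) $ i $ j) \<longlonglongrightarrow> 0" by simp
      moreover have "(\<lambda>k. P (r k) $ i $ j) \<longlonglongrightarrow> Ps $ i $ j" by (intro tendsto_vec_nth limP)
      ultimately show ?thesis using LIMSEQ_unique by blast
    qed
    then show ?thesis by (simp add: Phi_set_def)
  qed
  have zdom: "(Ps, ds, Ts) \<in> dom_f A" by (simp add: dom_f_def PsP dsD TsT)
  have ddiag: "det (diag_mat ds) > 0" using dsD by (rule det_diag_pos)
  define Fz where "Fz = ob X l1 l2 Ps ds Ts"
  have limF: "(\<lambda>k. F (r k)) \<longlonglongrightarrow> Fz" unfolding F_def Fz_def by (rule tendsto_ob[OF limP limD limT ddiag detTs])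
  have Fz_le: "Fz \<le> F t" for t
  proof (rule tendsto_upperbound[OF limF])
    show "eventually (\<lambda>k. F (r k) \<le> F t) sequentially"
      using eventually_ge_at_top[of t]
    proof (rule eventually_mono)
      fix k assume "t \<le> k"
      then have "t \<le> r k" using seq_suble[OF r, of k] by simp
      then show "F (r k) \<le> F t" using decseqD[OF decF] by blast
    qed
  qed simp
  have B3: "\<forall>R\<in>Theta_set A. Fz \<le> ob X l1 l2 Ps ds R"
  proof
    fix R :: "real^'n^'n" assume R: "R \<in> Theta_set A"
    have detR: "det R > 0" using R by (simp add: Theta_set_def pos_def_det_pos)
    have lim2: "(\<lambda>k. ob X l1 l2 (P (r k)) (D (r k)) R) \<longlonglongrightarrow> ob X l1 l2 Ps ds R"
      by (rule tendsto_ob[OF limP limD tendsto_const ddiag detR])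
    show "Fz \<le> ob X l1 l2 Ps ds R"
    proof (rule tendsto_le[OF _ lim2 limF])
      show "eventually (\<lambda>k. F (r k) \<le> ob X l1 l2 (P (r k)) (D (r k)) R) sequentially"
        using eventually_ge_at_top[of 1]
      proof (rule eventually_mono)
        fix k :: nat assume "1 \<le> k"
        then have "1 \<le> r k" using seq_suble[OF r, of k] by simp
        then obtain m where m: "r k = Suc m" by (cases "r k") auto
        show "F (r k) \<le> ob X l1 l2 (P (r k)) (D (r k)) R" unfolding m using step(6)[of m] R by blast
      qed
    qed simp
  qed
  have H1: "Fz \<le> ob X l1 l2 (P (Suc t)) (D t) (T t)" for t
  proof -
    have "F (Suc t) \<le> ob X l1 l2 (P (Suc t)) (D (Suc t)) (T t)" using step(6)[of t] dom[of t] by blast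
    also have "\<dots> \<le> ob X l1 l2 (P (Suc t)) (D t) (T t)" using step(4)[of t] dom[of t] by blast
    finally show ?thesis using Fz_le[of "Suc t"] by simp
  qed
  have B1: "\<forall>Q\<in>Phi_set. Fz \<le> ob X l1 l2 Q ds Ts"
  proof
    fix Q :: "real^('p::{finite,linorder})^('p::{finite,linorder})" assume Q: "Q \<in> Phi_set"
    have lim2: "(\<lambda>k. ob X l1 l2 Q (D (r k)) (T (r k))) \<longlonglongrightarrow> ob X l1 l2 Q ds Ts"
      by (rule tendsto_ob[OF tendsto_const limD limT ddiag detTs])
    show "Fz \<le> ob X l1 l2 Q ds Ts"
    proof (rule tendsto_lowerbound[OF lim2])
      show "eventually (\<lambda>k. Fz \<le> ob X l1 l2 Q (D (r k)) (T (r k))) sequentially"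
      proof (rule always_eventually, rule allI)
        fix k
        show "Fz \<le> ob X l1 l2 Q (D (r k)) (T (r k))"
          using H1[of "r k"] step(2)[of "r k"] Q by (meson order_trans)
      qed
    qed simp
  qed
  define g where "g k = n * ln (det (diag_mat (D (r k)))) + p * ln (det (T (r k)))" for k
  have limg: "g \<longlonglongrightarrow> n * ln (det (diag_mat ds)) + p * ln (det Ts)"
    unfolding g_def using ddiag detTs
    by (intro tendsto_intros tendsto_det tendsto_diag limD limT) auto
  obtain Kg where Kg: "Kg > 0" "\<forall>k. norm (g k) \<le> Kg"
    using convergent_imp_Bseq[OF convergentI[OF limg]] by (rule BseqE)
  have bnd: "norm (P (Suc (r k))) \<le> (F 0 + Kg) / l1" for k
  proof -
    have Tin: "T (r k) \<in> Theta_set A" using dom[of "r k"] by simp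
    have "ob X l1 l2 (P (Suc (r k))) (D (r k)) (T (r k)) \<ge> - real CARD('n) * ln (det (diag_mat (D (r k)))) - real CARD('p) * ln (det (T (r k))) + l1 * L1 (P (Suc (r k)))"
      by (rule LB[OF Tin l2])
    then have "- n * ln (det (diag_mat (D (r k)))) - p * ln (det (T (r k))) + l1 * L1 (P (Suc (r k)))
        \<le> ob X l1 l2 (P (Suc (r k))) (D (r k)) (T (r k))"
      unfolding n_def p_def by simp
    also have "\<dots> \<le> F (r k)" using step(2)[of "r k"] dom[of "r k"] unfolding F_def by blast
    also have "\<dots> \<le> F 0" by (rule F0)
    finally have "l1 * L1 (P (Suc (r k))) \<le> F 0 + g k" unfolding g_def by simp
    moreover have "g k \<le> Kg" using Kg(2)[rule_format, of k] by simp
    ultimately have "l1 * L1 (P (Suc (r k))) \<le> F 0 + Kg" by linarith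
    then have "L1 (P (Suc (r k))) \<le> (F 0 + Kg) / l1" using l1 by (simp add: le_divide_eq mult.commute)
    then show ?thesis using norm_le_L1[of "P (Suc (r k))"] by linarith
  qed
  have "bounded (range (\<lambda>k. P (Suc (r k))))" by (rule boundedI) (use bnd in auto)
  then obtain Pp g2 where g2: "strict_mono g2" and limPp: "((\<lambda>k. P (Suc (r k))) \<circ> g2) \<longlonglongrightarrow> Pp"
    using bounded_imp_convergent_subsequence by blast
  have limPp': "(\<lambda>k. P (Suc (r (g2 k)))) \<longlonglongrightarrow> Pp" using limPp by (simp add: o_def)
  have limD2: "(\<lambda>k. D (r (g2 k))) \<longlonglongrightarrow> ds" using LIMSEQ_subseq_LIMSEQ[OF limD g2] by (simp add: o_def)
  have limT2: "(\<lambda>k. T (r (g2 k))) \<longlonglongrightarrow> Ts" using LIMSEQ_subseq_LIMSEQ[OF limT g2] by (simp add: o_def)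
  have PpP: "Pp \<in> Phi_set"
  proof -
    have "Pp $ i $ j = 0" if "j \<le> i" for i j
    proof -
      have "P (Suc (r (g2 k))) $ i $ j = 0" for k using dom[of "Suc (r (g2 k))"] that by (simp add: Phi_set_def)
      then have "(\<lambda>k. P (Suc (r (g2 k))) $ i $ j) \<longlonglongrightarrow> 0" by simp
      moreover have "(\<lambda>k. P (Suc (r (g2 k))) $ i $ j) \<longlonglongrightarrow> Pp $ i $ j" by (intro tendsto_vec_nth limPp')
      ultimately show ?thesis using LIMSEQ_unique by blast
    qed
    then show ?thesis by (simp add: Phi_set_def)
  qed
  have Ppmin: "\<forall>Q\<in>Phi_set. ob X l1 l2 Pp ds Ts \<le> ob X l1 l2 Q ds Ts"
  proof
    fix Q :: "real^('p::{finite,linorder})^('p::{finite,linorder})" assume Q: "Q \<in> Phi_set"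
    have la: "(\<lambda>k. ob X l1 l2 (P (Suc (r (g2 k)))) (D (r (g2 k))) (T (r (g2 k)))) \<longlonglongrightarrow> ob X l1 l2 Pp ds Ts"
      by (rule tendsto_ob[OF limPp' limD2 limT2 ddiag detTs])
    have lb: "(\<lambda>k. ob X l1 l2 Q (D (r (g2 k))) (T (r (g2 k)))) \<longlonglongrightarrow> ob X l1 l2 Q ds Ts"
      by (rule tendsto_ob[OF tendsto_const limD2 limT2 ddiag detTs])
    show "ob X l1 l2 Pp ds Ts \<le> ob X l1 l2 Q ds Ts"
      by (rule tendsto_le[OF _ lb la]) (use step(2) Q in auto)
  qed
  have eqPp: "ob X l1 l2 Pp ds Ts = ob X l1 l2 Ps ds Ts"
    using Ppmin PsP B1 PpP unfolding Fz_def by (meson antisym)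
  have PsMin: "\<forall>Q\<in>Phi_set. ob X l1 l2 Ps ds Ts \<le> ob X l1 l2 Q ds Ts" using B1 unfolding Fz_def .
  have pdTs: "pos_def Ts" using TsT by (simp add: Theta_set_def)
  have fit: "X *v column j Pp = X *v column j Ps" for j
    using mid_unique[OF pdTs PsP PpP PsMin eqPp] l1 by simp
  have rv: "rvec X Pp e j = rvec X Ps e j" for e j by (simp add: rvec_def fit)
  have L1eq: "L1 Pp = L1 Ps"
  proof -
    have "l1 * L1 Pp = l1 * L1 Ps" using eqPp unfolding obj_eq rv by simp
    then show ?thesis using l1 by simp
  qed
  have obeq: "ob X l1 l2 Pp e Ts = ob X l1 l2 Ps e Ts" for e unfolding obj_eq rv L1eq ..
  have B2: "\<forall>e\<in>D_set. Fz \<le> ob X l1 l2 Ps e Ts"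
  proof
    fix e :: "real^('p::{finite,linorder})" assume e: "e \<in> D_set"
    have de: "det (diag_mat e) > 0" using e by (rule det_diag_pos)
    have lb: "(\<lambda>k. ob X l1 l2 (P (Suc (r (g2 k)))) e (T (r (g2 k)))) \<longlonglongrightarrow> ob X l1 l2 Pp e Ts"
      by (rule tendsto_ob[OF limPp' tendsto_const limT2 de detTs])
    have "Fz \<le> ob X l1 l2 Pp e Ts"
    proof (rule tendsto_lowerbound[OF lb])
      show "eventually (\<lambda>k. Fz \<le> ob X l1 l2 (P (Suc (r (g2 k)))) e (T (r (g2 k)))) sequentially"
      proof (rule always_eventually, rule allI)
        fix k
        let ?t = "r (g2 k)"
        have "Fz \<le> F (Suc ?t)" by (rule Fz_le)
        also have "\<dots> \<le> ob X l1 l2 (P (Suc ?t)) (D (Suc ?t)) (T ?t)" using step(6)[of ?t] dom[of ?t] by blast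
        also have "\<dots> \<le> ob X l1 l2 (P (Suc ?t)) e (T ?t)" using step(4)[of ?t] e by blast
        finally show "Fz \<le> ob X l1 l2 (P (Suc ?t)) e (T ?t)" .
      qed
    qed simp
    then show "Fz \<le> ob X l1 l2 Ps e Ts" using obeq by simp
  qed
  show ?thesis unfolding z
    by (rule cw_stationary[OF zdom]) (use B1 B2 B3 in \<open>simp_all add: Fz_def\<close>)
qed


theorem proposition1:
  fixes A :: "real^'n^'n" and lam1 lam2 :: real
  assumes "transpose A = A"
    and "\<forall>i j. A $ i $ j \<in> {0, 1}"
    and "lam1 > 0" and "lam2 > 0"
  shows "AE X in (lborel :: (real^'p::{finite,linorder}^'n) measure).
           \<forall>s. bcd_sequence X lam1 lam2 A s \<longrightarrow>
             (\<forall>z. cluster_point s z \<longrightarrow> stationary_point X lam1 lam2 A z)"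
    by (rule AE_I2) (auto intro: main_all[OF assms(3) assms(4)])

end
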